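(* Let $f,g\colon[0,2\pi)\times[0,2\pi)\to\mathbb{R}$ be given by $f(\theta_1,\theta_2)=\sin\theta_1+\sin(\theta_2-\theta_1)-\sin\theta_2$ and $g(\theta_1,\theta_2)=\cos\theta_1+\cos(\theta_2-\theta_1)+\cos\theta_2$. Then: (i) $f(\theta_1,\theta_2)\in[-\tfrac{3\sqrt3}{2},\tfrac{3\sqrt3}{2}]$ for all $\theta_1,\theta_2\in[0,2\pi)$, and $f(\theta_1,\theta_2)\in\{-\tfrac{3\sqrt3}{2},\tfrac{3\sqrt3}{2}\}$ if and only if $g(\theta_1,\theta_2)=-\tfrac32$; (ii) $f(\theta_1,\theta_1)=f(\theta_1,0)=f(0,\theta_2)=0$ for all $\theta_1,\theta_2\in[0,2\pi)$; moreover, for every $\theta_2\in(0,2\pi)$, $f(\cdot,\theta_2)>0$ on $(0,\theta_2)$ and $f(\cdot,\theta_2)<0$ on $(\theta_2,2\pi)$. *)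

theory Defs
  imports Complex_Main
begin

definition f21 :: "real \<Rightarrow> real \<Rightarrow> real" where
  "f21 t1 t2 = sin t1 + sin (t2 - t1) - sin t2"

definition g21 :: "real \<Rightarrow> real \<Rightarrow> real" where
  "g21 t1 t2 = cos t1 + cos (t2 - t1) + cos t2"

end

theory Submission imports Defs begin

lemma key0:
  fixes S C D :: real
  assumes "S^2 + C^2 = 1" "\<bar>D\<bar> \<le> 1" "C \<ge> 0"
  shows "(2*S*(D-C))^2 \<le> 27/4 \<and> ((2*S*(D-C))^2 = 27/4 \<longleftrightarrow> 2*C*D + 2*C^2 - 1 = -3/2)"
proof -
  have e0: "(2*S*(D-C))^2 = 4*S^2*(D-C)^2" by (simp add: power_mult_distrib)
  have e: "(2*S*(D-C))^2 = 4*(1-C^2)*(D-C)^2" unfolding e0 using assms(1) by (simp add: algebra_simps flip: distrib_left distrib_right)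
  have c1: "C^2 \<le> 1" using assms(1) zero_le_power2[of S] by linarith
  have s: "(D-C)^2 \<le> (1+C)^2" using assms by (subst abs_le_square_iff[symmetric]) auto
  have p: "4*(1-C^2)*(1+C)^2 = 27/4 - 4*(C-1/2)^2*(C^2+3*C+11/4)" by (simp add: power2_eq_square field_simps)
  have q: "C^2+3*C+11/4 > 0" using assms(3) zero_le_power2[of C] by linarith
  have m: "4*(1-C^2)*(D-C)^2 \<le> 4*(1-C^2)*(1+C)^2" using s c1 by (intro mult_left_mono) auto
  have le: "4*(1-C^2)*(1+C)^2 \<le> 27/4" using p q by (simp add: mult_nonneg_nonneg)
  show ?thesis
  proof (intro conjI iffI)
    show "(2*S*(D-C))^2 \<le> 27/4" using e m le by linarith
  next
    assume h: "(2*S*(D-C))^2 = 27/4"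
    have X0: "0 \<le> 4*(C-1/2)^2*(C^2+3*C+11/4)" using q by simp
    have "4*(C-1/2)^2*(C^2+3*C+11/4) = 0" using h e m p X0 by linarith
    hence C: "C = 1/2" using q by simp
    have "4*(1-C^2)*(D-C)^2 = 27/4" using h e by simp
    hence "4*(1-(1/2)^2)*(D-1/2)^2 = 27/4" using C by simp
    hence "(D-1/2)^2 = (3/2)^2" by (simp add: power2_eq_square)
    hence "D - 1/2 = 3/2 \<or> D - 1/2 = -3/2" by (simp add: power2_eq_iff)
    hence D: "D = -1" using assms(2) by auto
    show "2*C*D + 2*C^2 - 1 = -3/2" unfolding C D by (simp add: power2_eq_square)
  next
    assume g: "2*C*D + 2*C^2 - 1 = -3/2"
    have "C \<noteq> 0" using g by auto
    hence Cp: "C > 0" using assms(3) by simp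
    have "C*(2*C + 2*D) = -1/2" using g by (simp add: algebra_simps power2_eq_square)
    have "D \<ge> -1" using assms(2) by simp
    hence "C*(2*C - 2) + 1/2 \<le> 0" using \<open>C*(2*C + 2*D) = -1/2\<close> Cp
      using mult_left_mono[of "2*C - 2" "2*C+2*D" C] by simp
    hence "2*(C-1/2)^2 \<le> 0" by (simp add: power2_eq_square algebra_simps)
    hence C: "C = 1/2" using zero_le_power2[of "C-1/2"] by simp
    have "2*(1/2)*D + 2*(1/2)^2 - 1 = -3/2" using g unfolding C .
    hence D: "D = -1" by (simp add: power2_eq_square)
    have "4*(1-C^2)*(D-C)^2 = 27/4" unfolding C D by (simp add: power2_eq_square)
    thus "(2*S*(D-C))^2 = 27/4" using e by simp
  qed
qed

lemma key:
  fixes S C D :: real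
  assumes "S^2 + C^2 = 1" "\<bar>D\<bar> \<le> 1"
  shows "(2*S*(D-C))^2 \<le> 27/4 \<and> ((2*S*(D-C))^2 = 27/4 \<longleftrightarrow> 2*C*D + 2*C^2 - 1 = -3/2)"
proof (cases "C \<ge> 0")
  case True then show ?thesis using key0 assms by blast
next
  case False
  have "(2*S*((-D)-(-C)))^2 \<le> 27/4 \<and> ((2*S*((-D)-(-C)))^2 = 27/4 \<longleftrightarrow> 2*(-C)*(-D) + 2*(-C)^2 - 1 = -3/2)"
    using False assms by (intro key0) auto
  moreover have "(2*S*((-D)-(-C)))^2 = (2*S*(D-C))^2" by (simp add: power2_eq_square algebra_simps)
  ultimately show ?thesis by simp
qed

lemma fform: "f21 t1 t2 = 2*sin (t2/2) * (cos (t1 - t2/2) - cos (t2/2))"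
proof -
  have a: "t1 = t2/2 + (t1 - t2/2)" "t2 - t1 = t2/2 - (t1 - t2/2)" "t2 = 2*(t2/2)" by simp_all
  show ?thesis unfolding f21_def
    using sin_double[of "t2/2"] sin_add[of "t2/2" "t1 - t2/2"] sin_diff[of "t2/2" "t1 - t2/2"]
    by (simp add: algebra_simps)
qed

lemma gform: "g21 t1 t2 = 2*cos (t2/2) * cos (t1 - t2/2) + 2*(cos (t2/2))^2 - 1"
proof -
  have a: "t1 = t2/2 + (t1 - t2/2)" "t2 - t1 = t2/2 - (t1 - t2/2)" "t2 = 2*(t2/2)" by simp_all
  show ?thesis unfolding g21_def
    using cos_double_cos[of "t2/2"] cos_add[of "t2/2" "t1 - t2/2"] cos_diff[of "t2/2" "t1 - t2/2"]
    by (simp add: algebra_simps)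
qed

lemma fprod: "f21 t1 t2 = 4 * sin (t1/2) * sin ((t2-t1)/2) * sin (t2/2)"
proof -
  define x where "x = t1/2"
  define y where "y = (t2-t1)/2"
  have "t1 = 2*x" "t2 - t1 = 2*y" "t2 = 2*x + 2*y" "t2/2 = x + y" unfolding x_def y_def by (simp_all add: field_simps)
  hence "f21 t1 t2 = sin (2*x) + sin (2*y) - sin (2*x+2*y)" unfolding f21_def by (simp only:)
  also have "\<dots> = 4 * sin x * sin y * sin (x+y)"
    apply (simp only: sin_add cos_add sin_double cos_double)
    using sin_cos_squared_add[of x] sin_cos_squared_add[of y]
    by algebra
  finally have "f21 t1 t2 = 4 * sin x * sin y * sin (t2/2)" by (simp only: \<open>t2/2 = x + y\<close>)
  thus ?thesis unfolding x_def y_def .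

qed

lemma parti:
  fixes t1 t2 :: real
  shows "f21 t1 t2 \<in> {- (3 * sqrt 3 / 2) .. 3 * sqrt 3 / 2} \<and>
            (f21 t1 t2 \<in> {- (3 * sqrt 3 / 2), 3 * sqrt 3 / 2} \<longleftrightarrow> g21 t1 t2 = - 3 / 2)"
proof -
  define a :: real where "a = 3 * sqrt 3 / 2"
  have a2: "a^2 = 27/4" unfolding a_def by (simp add: power_divide power_mult_distrib)
  have a0: "a \<ge> 0" unfolding a_def by simp
  have K: "(f21 t1 t2)^2 \<le> 27/4 \<and> ((f21 t1 t2)^2 = 27/4 \<longleftrightarrow> g21 t1 t2 = -3/2)"
    unfolding fform gform by (rule key) auto
  have "\<bar>f21 t1 t2\<bar> \<le> \<bar>a\<bar>" using K a2 by (subst abs_le_square_iff) simp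
  hence 1: "f21 t1 t2 \<in> {-a..a}" using a0 by auto
  have 2: "(f21 t1 t2 \<in> {-a, a}) \<longleftrightarrow> (f21 t1 t2)^2 = a^2"
    using a0 by (auto simp: power2_eq_iff)
  show ?thesis using 1 2 K a2 unfolding a_def[symmetric] by auto
qed

theorem lemma2p1:
  shows "(\<forall>t1\<in>{0..<2*pi}. \<forall>t2\<in>{0..<2*pi}.
            f21 t1 t2 \<in> {- (3 * sqrt 3 / 2) .. 3 * sqrt 3 / 2} \<and>
            (f21 t1 t2 \<in> {- (3 * sqrt 3 / 2), 3 * sqrt 3 / 2} \<longleftrightarrow> g21 t1 t2 = - 3 / 2))
       \<and> (\<forall>t1\<in>{0..<2*pi}. \<forall>t2\<in>{0..<2*pi}.
            f21 t1 t1 = 0 \<and> f21 t1 0 = 0 \<and> f21 0 t2 = 0)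
       \<and> (\<forall>t2\<in>{0<..<2*pi}.
            (\<forall>t1\<in>{0<..<t2}. f21 t1 t2 > 0) \<and>
            (\<forall>t1\<in>{t2<..<2*pi}. f21 t1 t2 < 0))"
proof (intro conjI ballI)
  fix t1 t2 :: real
  show "f21 t1 t2 \<in> {- (3 * sqrt 3 / 2) .. 3 * sqrt 3 / 2}"
       "(f21 t1 t2 \<in> {- (3 * sqrt 3 / 2), 3 * sqrt 3 / 2} \<longleftrightarrow> g21 t1 t2 = - 3 / 2)"
    using parti by blast+
  show "f21 t1 t1 = 0" "f21 t1 0 = 0" "f21 0 t2 = 0" unfolding f21_def by simp_all
next
  fix t1 t2 :: real
  assume t2: "t2 \<in> {0<..<2*pi}" and t1: "t1 \<in> {0<..<t2}"
  have "sin (t1/2) > 0" "sin ((t2-t1)/2) > 0" "sin (t2/2) > 0"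
    using t1 t2 by (auto intro!: sin_gt_zero)
  thus "f21 t1 t2 > 0" unfolding fprod by simp
next
  fix t1 t2 :: real
  assume t2: "t2 \<in> {0<..<2*pi}" and t1: "t1 \<in> {t2<..<2*pi}"
  have "sin (t1/2) > 0" "sin ((t1-t2)/2) > 0" "sin (t2/2) > 0"
    using t1 t2 by (auto intro!: sin_gt_zero)
  moreover have "sin ((t2-t1)/2) = - sin ((t1-t2)/2)"
    by (metis minus_diff_eq minus_divide_left sin_minus)
  ultimately show "f21 t1 t2 < 0" unfolding fprod by (simp add: mult_pos_neg)
qed

end
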